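(* Let $p$ be an odd prime, let $l>2$ be an integer with $l\mid p-1$, and let $\omega$ be a primitive $l$-th root of unity in $\mathbb{F}_p$. Let $n=lp$ if $l$ is even and $n=2lp$ if $l$ is odd. For each $(r_1,r_2,r_3)\in\{(2,1,1),(1,2,1),(1,1,2)\}$, the cyclic code $\mathcal{C}_{(r_1,r_2,r_3)}$ of length $n$ over $\mathbb{F}_p$ generated by $(x-1)^{r_1}(x+1)^{r_2}(x-\omega)^{r_3}$ is an MDS symbol-pair code with minimum symbol-pair distance $d_p=6$.
   Context: For $\mathbf{x}=(x_0,\dots,x_{n-1})\in\mathbb{F}_p^n$, the symbol-pair weight is $\omega_p(\mathbf{x})=|\{i:(x_i,x_{i+1})\neq(0,0)\}|$ (indices modulo $n$), and the symbol-pair distance is $D_p(\mathbf{x},\mathbf{y})=|\{i:(x_i,x_{i+1})\neq(y_i,y_{i+1})\}|$. The minimum symbol-pair distance $d_p(\mathcal{C})$ is the minimum of $D_p$ over distinct codewords. A code of length $n$ with minimum symbol-pair distance $d_p$ is an MDS symbol-pair code if $|\mathcal{C}|=p^{n-d_p+2}$. Vectors are identified with polynomials in $\mathbb{F}_p[x]/\langle x^n-1\rangle$; the cyclic code generated by $g(x)\mid x^n-1$ is the ideal $\langle g(x)\rangle$. *)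

theory Defs
  imports "HOL-Computational_Algebra.Polynomial" "HOL-Library.Cardinality"
begin

text \<open>Vectors of length n over a field are identified with polynomials of degree < n
 (residues modulo x^n - 1); the i-th coordinate is coeff c i, indices taken mod n.\<close>

definition cyclic_code :: "nat \<Rightarrow> 'a::field poly \<Rightarrow> 'a poly set" where
  "cyclic_code n g = {(a * g) mod (monom 1 n - 1) | a. True}"

definition pair_weight :: "nat \<Rightarrow> 'a::zero poly \<Rightarrow> nat" where
  "pair_weight n x = card {i. i < n \<and> (coeff x i, coeff x (Suc i mod n)) \<noteq> (0, 0)}"

definition pair_dist :: "nat \<Rightarrow> 'a::zero poly \<Rightarrow> 'a poly \<Rightarrow> nat" where
  "pair_dist n x y = card {i. i < n \<and>
     (coeff x i, coeff x (Suc i mod n)) \<noteq> (coeff y i, coeff y (Suc i mod n))}"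

definition min_pair_dist :: "nat \<Rightarrow> 'a::zero poly set \<Rightarrow> nat" where
  "min_pair_dist n C = Min {pair_dist n x y | x y. x \<in> C \<and> y \<in> C \<and> x \<noteq> y}"

definition mds_pair_code :: "nat \<Rightarrow> 'a::{zero,finite} poly set \<Rightarrow> bool" where
  "mds_pair_code n C \<longleftrightarrow> card C = CARD('a) ^ (n - min_pair_dist n C + 2)"

definition primitive_root_of_unity :: "nat \<Rightarrow> 'a::field \<Rightarrow> bool" where
  "primitive_root_of_unity l w \<longleftrightarrow> 0 < l \<and> w ^ l = 1 \<and> (\<forall>k. 0 < k \<and> k < l \<longrightarrow> w ^ k \<noteq> 1)"

end

theory Submission
  imports Defs
begin

lemma Q_card_ge:
  fixes T :: "nat set"
  assumes fin: "finite T" and ne: "T \<noteq> {}" and z: "0 \<notin> T"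
  shows "finite {i. i \<in> T \<or> Suc i \<in> T}" "card {i. i \<in> T \<or> Suc i \<in> T} \<ge> card T + 1"
proof -
  have sub: "{i. i \<in> T \<or> Suc i \<in> T} \<subseteq> {..Max T}"
    using fin by (auto intro: Max_ge dest: Max_ge[OF fin])
  show f: "finite {i. i \<in> T \<or> Suc i \<in> T}" using finite_subset[OF sub] by simp
  define a where "a = Min T"
  have aT: "a \<in> T" using fin ne a_def by simp
  have a0: "a \<noteq> 0" using aT z by (metis)
  have "a - 1 \<notin> T" using a0 Min_le[OF fin] a_def by (metis diff_less less_one not_gr_zero not_le)
  moreover have "insert (a-1) T \<subseteq> {i. i \<in> T \<or> Suc i \<in> T}" using aT a0 by auto
  ultimately have "card (insert (a-1) T) \<le> card {i. i \<in> T \<or> Suc i \<in> T}"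
    by (intro card_mono f) 
  then show "card {i. i \<in> T \<or> Suc i \<in> T} \<ge> card T + 1" using \<open>a - 1 \<notin> T\<close> fin by simp
qed

lemma card6:
  fixes a b c d e f :: nat
  assumes "a<b" "b<c" "c<d" "d<e" "e<f"
  shows "card {a,b,c,d,e,f} = 6"
proof -
  have "sorted_wrt (<) [a,b,c,d,e,f]" using assms by auto
  then have "distinct [a,b,c,d,e,f]" by (simp add: strict_sorted_iff)
  then have "card (set [a,b,c,d,e,f]) = 6" by (subst distinct_card) auto
  then show ?thesis by simp
qed

lemma comb:
  fixes T :: "nat set"
  assumes fin: "finite T" and ne: "T \<noteq> {}" and z: "0 \<notin> T"
    and c5: "card {i. i \<in> T \<or> Suc i \<in> T} \<le> 5"
  shows "(\<exists>a. T \<subseteq> {a..a+3}) \<or> (\<exists>u v. u < v \<and> T = {u,v})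
       \<or> (\<exists>s t. s \<noteq> t \<and> s \<noteq> Suc t \<and> T = {s, t, Suc t})"
proof -
  let ?Q = "{i. i \<in> T \<or> Suc i \<in> T}"
  note Qf = Q_card_ge[OF fin ne z]
  have cT: "card T \<le> 4" using Qf c5 by simp
  define xs where "xs = sorted_list_of_set T"
  have sx: "sorted_wrt (<) xs" and setx: "set xs = T" and lx: "length xs = card T"
    using fin xs_def by auto
  have cpos: "card T > 0" using fin ne by (simp add: card_gt_0_iff)
  have mono: "card A \<le> card ?Q" if "A \<subseteq> ?Q" for A using card_mono[OF Qf(1) that] .
  consider "card T = 1" | "card T = 2" | "card T = 3" | "card T = 4" using cT cpos by linarith
  then show ?thesis
  proof cases
    case 1
    then obtain x where "xs = [x]" using lx by (cases xs) auto
    then have "T = {x}" using setx by auto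
    then show ?thesis by auto
  next
    case 2
    then obtain x y where "xs = [x,y]" using lx by (auto simp: numeral_eq_Suc length_Suc_conv)
    then have "T = {x,y}" "x < y" using setx sx by auto
    then show ?thesis by blast
  next
    case 3
    then obtain x y w where xs: "xs = [x,y,w]" using lx
      by (auto simp: numeral_eq_Suc length_Suc_conv)
    then have T: "T = {x,y,w}" and o: "x < y" "y < w" using setx sx by auto
    have x0: "x \<noteq> 0" using z T by auto
    show ?thesis
    proof (cases "w \<le> x + 3")
      case True then show ?thesis using T o by (intro disjI1 exI[of _ x]) auto
    next
      case False
      show ?thesis
      proof (cases "y = Suc x")
        case True then show ?thesis using T o False by (intro disjI2 exI[of _ w] exI[of _ x]) auto
      next
        case yx: False
        show ?thesis
        proof (cases "w = Suc y")
          case True then show ?thesis using T o by (intro disjI2 exI[of _ x] exI[of _ y]) auto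
        next
          case False
          have "{x-1,x,y-1,y,w-1,w} \<subseteq> ?Q" using T x0 o by auto
          moreover have "card {x-1,x,y-1,y,w-1,w} = 6" using x0 o yx False by (intro card6) auto
          ultimately have "6 \<le> card ?Q" using mono by metis
          then show ?thesis using c5 by simp
        qed
      qed
    qed
  next
    case 4
    then obtain x y w v where xs: "xs = [x,y,w,v]" using lx
      by (auto simp: numeral_eq_Suc length_Suc_conv)
    then have T: "T = {x,y,w,v}" and o: "x < y" "y < w" "w < v" using setx sx by auto
    have x0: "x \<noteq> 0" using z T by auto
    show ?thesis
    proof (cases "v \<le> x + 3")
      case True then show ?thesis using T o by (intro disjI1 exI[of _ x]) auto
    next
      case False
      have "\<exists>A. A \<subseteq> ?Q \<and> card A = 6"
      proof (cases "y = Suc x")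
        case False
        have "{x-1,x,y-1,y,w,v} \<subseteq> ?Q" using T x0 o by auto
        moreover have "card {x-1,x,y-1,y,w,v} = 6" using x0 o False by (intro card6) auto
        ultimately show ?thesis by blast
      next
        case yx: True
        show ?thesis
        proof (cases "w = Suc y")
          case False
          have "{x-1,x,y,w-1,w,v} \<subseteq> ?Q" using T x0 o by auto
          moreover have "card {x-1,x,y,w-1,w,v} = 6" using x0 o False yx by (intro card6) auto
          ultimately show ?thesis by blast
        next
          case True
          have "{x-1,x,y,w,v-1,v} \<subseteq> ?Q" using T x0 o by auto
          moreover have "card {x-1,x,y,w,v-1,v} = 6" using x0 o True yx \<open>\<not> v \<le> x + 3\<close> by (intro card6) auto
          ultimately show ?thesis by blast
        qed
      qed
      then have "6 \<le> card ?Q" using mono by metis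
      then show ?thesis using c5 by simp
    qed
  qed
qed

lemma dvd_G:
  fixes q :: "'a::field poly"
  assumes q1: "poly q 1 = 0" and qm1: "poly q (-1) = 0" and qw: "poly q w = 0"
    and qd: "poly (pderiv q) a = 0" and a: "a \<in> {1,-1,w}"
    and w1: "w \<noteq> 1" and wm1: "w \<noteq> -1" and two: "(2::'a) \<noteq> 0"
  shows "[:-a,1:] * ([:-1,1:]*[:1,1:]*[:-w,1:]) dvd q"
proof -
  obtain q1 where e1: "q = [:-1,1:] * q1" using q1 poly_eq_0_iff_dvd by blast
  have "poly q1 (-1) = 0" using qm1 two unfolding e1 by simp
  then obtain q2 where e2: "q1 = [:1,1:] * q2" using poly_eq_0_iff_dvd[of q1 "-1"] by auto
  have "(w - 1) * (w + 1) \<noteq> 0" using w1 wm1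
    by (metis add_eq_0_iff2 mult_eq_0_iff right_minus_eq) 
  then have "poly q2 w = 0" using qw unfolding e1 e2 by (simp add: algebra_simps)
  then obtain q3 where e3: "q2 = [:-w,1:] * q3" using poly_eq_0_iff_dvd by blast
  define G0 where "G0 = [:-1,1:]*[:1,1:]*[:-w,1:]"
  have qe: "q = G0 * q3" unfolding G0_def e1 e2 e3 by (simp add: algebra_simps)
  have G0a: "poly G0 a = 0" using a unfolding G0_def by auto
  have dG: "pderiv G0 = [:-1, -2*w, 3:]" unfolding G0_def
    by (simp add: pderiv_pCons algebra_simps)
  have h1: "1 - w \<noteq> 0" using w1 by simp
  have h2: "1 + w \<noteq> 0" using wm1 by (metis add.commute add_eq_0_iff2)
  have h3: "(w - 1) * (w + 1) \<noteq> 0" using w1 wm1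
      by (metis add_eq_0_iff2 mult_eq_0_iff right_minus_eq) 
  have "poly (pderiv G0) a \<noteq> 0"
  proof -
    have "a = 1 \<or> a = -1 \<or> a = w" using a by auto
    moreover have "poly (pderiv G0) 1 = 2 * (1 - w)" unfolding dG by (simp add: algebra_simps)
    moreover have "poly (pderiv G0) (-1) = 2 * (1 + w)" unfolding dG by (simp add: algebra_simps)
    moreover have "poly (pderiv G0) w = (w - 1) * (w + 1)" unfolding dG by (simp add: algebra_simps power2_eq_square)
    moreover have "2 * (1 - w) \<noteq> 0" using two h1 by (metis mult_eq_0_iff)
    moreover have "2 * (1 + w) \<noteq> 0" using two h2 by (metis mult_eq_0_iff)
    ultimately show ?thesis using h3 by metis
  qed
  moreover have "poly (pderiv q) a = poly q3 a * poly (pderiv G0) a"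
    unfolding qe pderiv_mult using G0a by simp
  ultimately have "poly q3 a = 0" using qd by simp
  then obtain q4 where e4: "q3 = [:-a,1:] * q4" using poly_eq_0_iff_dvd by blast
  have "q = ([:-a,1:] * G0) * q4" unfolding qe e4 by (simp add: algebra_simps)
  then show ?thesis unfolding G0_def by (rule dvdI)
qed

lemma dvd_G_conv:
  fixes q :: "'a::field poly"
  assumes d: "[:-a,1:] * ([:-1,1:]*[:1,1:]*[:-w,1:]) dvd q" and a: "a \<in> {1,-1,w}"
  shows "poly q 1 = 0 \<and> poly q (-1) = 0 \<and> poly q w = 0 \<and> poly (pderiv q) a = 0"
proof -
  define G where "G = [:-1,1:]*[:1,1:]*[:-w,1:]"
  obtain k where e0: "q = [:-a,1:] * G * k" using d unfolding G_def by (rule dvdE)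
  have e: "q = [:-a,1:] * (G * k)" using e0 by (simp only: mult.assoc)
  have "poly G a = 0" "poly G 1 = 0" "poly G (-1) = 0" "poly G w = 0" using a unfolding G_def by auto
  then show ?thesis unfolding e pderiv_mult by (simp add: pderiv_pCons)
qed

lemma sum_rep:
  fixes c :: "'a::field poly"
  assumes "degree c < m"
  shows "poly c z = (\<Sum>i<m. coeff c i * z^i)"
    and "z * poly (pderiv c) z = (\<Sum>i<m. of_nat i * coeff c i * z^i)"
proof -
  have "poly c z = (\<Sum>i\<le>degree c. coeff c i * z^i)" by (rule poly_altdef)
  also have "\<dots> = (\<Sum>i<m. coeff c i * z^i)"
    using assms by (intro sum.mono_neutral_left) (auto simp: coeff_eq_0)
  finally show "poly c z = (\<Sum>i<m. coeff c i * z^i)" .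
  have "degree (pderiv c) \<le> degree c" by (rule degree_le) (auto simp: coeff_pderiv coeff_eq_0)
  then have dd: "degree (pderiv c) < m" using assms by simp
  have "z * poly (pderiv c) z = z * (\<Sum>i\<le>degree (pderiv c). coeff (pderiv c) i * z^i)"
    by (simp add: poly_altdef)
  also have "\<dots> = z * (\<Sum>i<m. coeff (pderiv c) i * z^i)"
    using dd by (subst sum.mono_neutral_left[of "{..<m}"]) (auto simp: coeff_eq_0)
  also have "\<dots> = (\<Sum>i<m. of_nat (Suc i) * coeff c (Suc i) * z^(Suc i))"
    by (simp add: sum_distrib_left coeff_pderiv algebra_simps)
  also have "\<dots> = (\<Sum>i<Suc m. of_nat i * coeff c i * z^i)"
    by (subst sum.lessThan_Suc_shift) simp
  also have "\<dots> = (\<Sum>i<m. of_nat i * coeff c i * z^i)"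
    using assms by (simp add: coeff_eq_0)
  finally show "z * poly (pderiv c) z = (\<Sum>i<m. of_nat i * coeff c i * z^i)" .
qed

locale pset =
  fixes p l n :: nat and w a :: "'a::{field,finite}"
  assumes prime_p: "prime p" and odd_p: "odd p" and card_a: "CARD('a) = p"
    and l2: "l > 2" and ldvd: "l dvd p - 1" and prim: "primitive_root_of_unity l w"
    and n_def: "n = (if even l then l * p else 2 * l * p)"
    and a_in: "a \<in> {1, -1, w}"
begin

definition G :: "'a poly" where "G = [:-a,1:] * ([:-1,1:]*[:1,1:]*[:-w,1:])"

lemma ofnat_card: "of_nat CARD('a) = (0::'a)"
proof -
  have "(\<Sum>y\<in>UNIV. y + 1) = (\<Sum>y\<in>UNIV. (y::'a))"
    by (rule sum.reindex_bij_witness[of _ "\<lambda>y. y - 1" "\<lambda>y. y + 1"]) auto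
  then show ?thesis by (simp add: sum.distrib)
qed

lemma charp: "CHAR('a) = p"
proof -
  have "CHAR('a) dvd p" using ofnat_card card_a of_nat_eq_0_iff_char_dvd by metis
  moreover from prime_p have "\<forall>m. m dvd p \<longrightarrow> m = 1 \<or> m = p" by (simp add: prime_nat_iff)
  ultimately have "CHAR('a) = 1 \<or> CHAR('a) = p" by blast
  then show ?thesis by simp
qed

lemma ofnat0: "of_nat k = (0::'a) \<longleftrightarrow> p dvd k"
  using of_nat_eq_0_iff_char_dvd charp by metis

lemma p3: "p \<ge> 3"
proof -
  have "p \<ge> 2" using prime_p prime_ge_2_nat by blast
  moreover have "p \<noteq> 2" using odd_p by auto
  ultimately show ?thesis by linarith
qed

lemma two: "(2::'a) \<noteq> 0"
proof
  assume "(2::'a) = 0"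
  then have "of_nat 2 = (0::'a)" by simp
  then have "p dvd 2" using ofnat0 by blast
  then show False using p3 by (auto dest: dvd_imp_le)
qed

lemma wl: "w ^ l = 1" and lpos: "l > 0" using prim unfolding primitive_root_of_unity_def by auto

lemma w_pow: "w ^ d = 1 \<longleftrightarrow> l dvd d"
proof
  assume h: "w ^ d = 1"
  have "w ^ d = w ^ (l * (d div l) + d mod l)" by simp
  also have "\<dots> = (w ^ l) ^ (d div l) * w ^ (d mod l)" by (simp only: power_add power_mult)
  finally have "w ^ (d mod l) = 1" using h wl by simp
  moreover have "d mod l < l" using lpos by simp
  moreover have "\<forall>k. 0 < k \<and> k < l \<longrightarrow> w ^ k \<noteq> 1" using prim unfolding primitive_root_of_unity_def by blast
  ultimately have "d mod l = 0" by (cases "d mod l = 0") auto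
  then show "l dvd d" by auto
next
  assume "l dvd d" then obtain k where "d = l * k" by auto
  then show "w ^ d = 1" using wl by (simp add: power_mult)
qed

lemma w0: "w \<noteq> 0" using wl lpos by (metis power_0_left zero_neq_one neq0_conv)
lemma w1: "w \<noteq> 1" using w_pow[of 1] l2 by (auto dest: dvd_imp_le)
lemma w2: "w ^ 2 \<noteq> 1" using w_pow[of 2] l2 by (auto dest: dvd_imp_le)
lemma wm1: "w \<noteq> -1" using w2 by auto

lemma l_lt_p: "l < p"
proof -
  have "p - 1 > 0" using p3 by simp
  then have "l \<le> p - 1" using ldvd by (simp add: dvd_imp_le)
  then show ?thesis using p3 by simp
qed

lemma ln: "l dvd n" and pn: "p dvd n" and en: "even n" and n9: "n \<ge> 9"
proof -
  show "l dvd n" "p dvd n" "even n" unfolding n_def by auto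
  have "l * p \<ge> 3 * 3" using l2 p3 by (intro mult_le_mono) auto
  then show "n \<ge> 9" unfolding n_def by auto
qed

lemma ndvd: assumes "p dvd d" "even d" "l dvd d" shows "n dvd d"
proof -
  have npl: "\<not> p dvd l" using l_lt_p lpos by (auto dest: dvd_imp_le)
  have cop: "coprime l p" using prime_imp_coprime[OF prime_p npl] by (simp add: coprime_commute)
  show ?thesis
  proof (cases "even l")
    case True
    then show ?thesis unfolding n_def using divides_mult[OF assms(3) assms(1) cop] by simp
  next
    case False
    have c2: "coprime 2 l" using False by simp
    have "2 * l dvd d" using divides_mult[OF assms(2) assms(3) c2] .
    moreover have "\<not> p dvd 2 * l"
    proof
      assume "p dvd 2 * l"
      then have "p dvd 2 \<or> p dvd l" using prime_p prime_dvd_mult_iff by blast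
      then show False using npl p3 by (auto dest: dvd_imp_le)
    qed
    then have "coprime (2 * l) p" using prime_imp_coprime[OF prime_p, of "2*l"] coprime_commute by blast
    ultimately have "2 * l * p dvd d" using divides_mult assms(1) by blast
    then show ?thesis unfolding n_def using False by simp
  qed
qed

lemma roots: assumes "z \<in> {1, -1, w}" shows "z ^ n = 1" "z \<noteq> 0"
  using assms en ln w_pow w0 by auto

end

lemma card_deg:
  assumes "k > 0"
  shows "card {x::'a::{field,finite} poly. degree x < k} = CARD('a) ^ k"
proof -
  have inj: "inj_on Poly {xs::'a list. length xs = k}"
  proof (rule inj_onI)
    fix xs ys :: "'a list" assume "xs \<in> {xs. length xs = k}" "ys \<in> {xs. length xs = k}" "Poly xs = Poly ys"
    then have l: "length xs = k" "length ys = k" and "\<And>i. nth_default 0 xs i = nth_default 0 ys i"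
      by (auto simp: poly_eq_iff)
    then show "xs = ys" by (metis nth_equalityI nth_default_nth)
  qed
  have img: "Poly ` {xs::'a list. length xs = k} = {x. degree x < k}"
  proof
    show "Poly ` {xs::'a list. length xs = k} \<subseteq> {x. degree x < k}"
    proof
      fix x assume "x \<in> Poly ` {xs::'a list. length xs = k}"
      then obtain xs where x: "x = Poly xs" "length xs = k" by auto
      have "degree x \<le> k - 1" unfolding x
        by (rule degree_le) (auto simp: nth_default_def x(2))
      then show "x \<in> {x. degree x < k}" using assms by simp
    qed
    show "{x. degree x < k} \<subseteq> Poly ` {xs::'a list. length xs = k}"
    proof
      fix x :: "'a poly" assume "x \<in> {x. degree x < k}"
      then have d: "degree x < k" by simp
      have "x = Poly (map (coeff x) [0..<k])"
        by (rule poly_eqI) (use d in \<open>auto simp: nth_default_def coeff_eq_0\<close>)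
      then show "x \<in> Poly ` {xs::'a list. length xs = k}" by (intro image_eqI) auto
    qed
  qed
  have "card {x::'a poly. degree x < k} = card {xs::'a list. length xs = k}"
    using card_image[OF inj] img by simp
  also have "\<dots> = CARD('a) ^ k" using card_lists_length_eq[of "UNIV::'a set" k] by simp
  finally show ?thesis .
qed

context pset begin

lemma G_dvd_iff: "G dvd q \<longleftrightarrow> poly q 1 = 0 \<and> poly q (-1) = 0 \<and> poly q w = 0 \<and> poly (pderiv q) a = 0"
  using dvd_G[of q w a] dvd_G_conv[of a w q] a_in w1 wm1 two unfolding G_def by blast

lemma G_ne: "G \<noteq> 0" unfolding G_def by simp

lemma degG: "degree G = 4" unfolding G_def by (simp add: degree_mult_eq)

lemma degN: "degree (monom 1 n - 1 :: 'a poly) = n"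
proof -
  have "n > 0" using n9 by simp
  have "monom 1 n - 1 = monom 1 n + (- 1 :: 'a poly)" by simp
  also have "degree \<dots> = n" using \<open>n > 0\<close> by (subst degree_add_eq_left) (auto simp: degree_monom_eq)
  finally show ?thesis .
qed

lemma G_dvd_N: "G dvd (monom 1 n - 1)"
proof -
  have "n > 0" using n9 by simp
  have pd: "pderiv (monom 1 n - 1 :: 'a poly) = monom (of_nat n) (n - 1)"
    by (simp add: pderiv_diff pderiv_monom)
  have "of_nat n = (0::'a)" using ofnat0 pn by simp
  then show ?thesis unfolding G_dvd_iff pd using roots[of 1] roots[of "-1"] roots[of w]
    by (simp add: poly_monom)
qed

lemma code_eq: "cyclic_code n G = (\<lambda>x. x * G) ` {x. degree x < n - 4}"
proof
  let ?N = "monom 1 n - 1 :: 'a poly"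
  have Nne: "?N \<noteq> 0" using degN n9 by (metis degree_0 not_numeral_le_zero)
  obtain H where NH: "?N = G * H" using G_dvd_N by (rule dvdE)
  show "cyclic_code n G \<subseteq> (\<lambda>x. x * G) ` {x. degree x < n - 4}"
  proof
    fix c assume "c \<in> cyclic_code n G"
    then obtain b where c: "c = (b * G) mod ?N" unfolding cyclic_code_def by auto
    have "c = b * G - (b * G div ?N) * ?N" unfolding c by (simp add: mod_div_mult_eq minus_div_mult_eq_mod[symmetric])
    also have "\<dots> = (b - (b * G div ?N) * H) * G" unfolding NH by (simp add: algebra_simps)
    finally have ce: "c = (b - (b * G div ?N) * H) * G" .
    define x where "x = b - (b * G div ?N) * H"
    have "c = 0 \<or> degree c < n" using degree_mod_less[OF Nne, of "b*G"] degN c by auto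
    moreover have xG: "c = x * G" using ce x_def by simp
    ultimately have "degree x < n - 4"
    proof (cases "x = 0")
      case True then show ?thesis using n9 by simp
    next
      case False
      then have "c \<noteq> 0" using xG G_ne by simp
      moreover have "degree c = degree x + 4" using xG degG False G_ne by (simp add: degree_mult_eq)
      ultimately show ?thesis using \<open>c = 0 \<or> degree c < n\<close> by simp
    qed
    then show "c \<in> (\<lambda>x. x * G) ` {x. degree x < n - 4}" using ce x_def by auto
  qed
  show "(\<lambda>x. x * G) ` {x. degree x < n - 4} \<subseteq> cyclic_code n G"
  proof
    fix c assume "c \<in> (\<lambda>x. x * G) ` {x. degree x < n - 4}"
    then obtain x where c: "c = x * G" "degree x < n - 4" by auto
    have "degree c < n"
    proof (cases "x = 0")
      case True then show ?thesis using c n9 by simp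
    next
      case False then show ?thesis using c degG G_ne n9 by (simp add: degree_mult_eq)
    qed
    then have "c mod ?N = c" using degN by (simp add: mod_poly_less)
    then show "c \<in> cyclic_code n G" unfolding cyclic_code_def using c by (metis (mono_tags, lifting) mem_Collect_eq)
  qed
qed

lemma card_code: "card (cyclic_code n G) = p ^ (n - 4)"
proof -
  have "inj_on (\<lambda>x. x * G) {x. degree x < n - 4}" using G_ne by (auto intro: inj_onI)
  then have "card (cyclic_code n G) = card {x::'a poly. degree x < n - 4}"
    unfolding code_eq by (rule card_image)
  also have "\<dots> = p ^ (n - 4)" using card_deg[where 'a='a, of "n - 4"] n9 card_a by simp
  finally show ?thesis .
qed

lemma code_mem: assumes "c \<in> cyclic_code n G" shows "degree c < n" "G dvd c"
proof -
  from assms obtain x where c: "c = x * G" "degree x < n - 4" unfolding code_eq by auto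
  show "G dvd c" using c by simp
  show "degree c < n"
  proof (cases "x = 0")
    case True then show ?thesis using c n9 by simp
  next
    case False then show ?thesis using c degG G_ne n9 by (simp add: degree_mult_eq)
  qed
qed

lemma code_G: "G \<in> cyclic_code n G" and code_0: "0 \<in> cyclic_code n G"
proof -
  have "G = (\<lambda>x. x * G) 1" "(0::'a poly) = (\<lambda>x. x * G) 0" by simp_all
  moreover have "(1::'a poly) \<in> {x. degree x < n - 4}" "(0::'a poly) \<in> {x. degree x < n - 4}" using n9 by simp_all
  ultimately show "G \<in> cyclic_code n G" "0 \<in> cyclic_code n G" unfolding code_eq by (metis image_eqI)+
qed

end

context pset begin

lemma pow_mod: assumes "z \<in> {1,-1,w}" shows "z ^ (x mod n) = z ^ x"
proof -
  have "z ^ x = z ^ (n * (x div n) + x mod n)" by simp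
  also have "\<dots> = (z ^ n) ^ (x div n) * z ^ (x mod n)" by (simp only: power_add power_mult)
  finally show ?thesis using roots(1)[OF assms] by simp
qed

lemma ofnat_mod: "(of_nat (x mod n) :: 'a) = of_nat x"
proof -
  have "(of_nat x :: 'a) = of_nat (n * (x div n) + x mod n)" by simp
  also have "\<dots> = of_nat n * of_nat (x div n) + of_nat (x mod n)" by (simp only: of_nat_add of_nat_mult)
  finally show ?thesis using ofnat0 pn by simp
qed

lemma lower:
  assumes dc: "degree c < n" and Gc: "G dvd c" and c0: "c \<noteq> 0"
  shows "6 \<le> card {i. i < n \<and> (coeff c i, coeff c (Suc i mod n)) \<noteq> (0,0)}"
proof (rule ccontr)
  define f where "f = coeff c"
  let ?P = "{i. i < n \<and> (f i, f (Suc i mod n)) \<noteq> (0,0)}"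
  assume "\<not> 6 \<le> card {i. i < n \<and> (coeff c i, coeff c (Suc i mod n)) \<noteq> (0,0)}"
  then have c5: "card ?P \<le> 5" unfolding f_def by simp
  have pc: "poly c 1 = 0" "poly c (-1) = 0" "poly c w = 0" "poly (pderiv c) a = 0"
    using Gc G_dvd_iff by auto
  have E: "(\<Sum>i<n. f i * z^i) = 0" if "z \<in> {1,-1,w}" for z
    using sum_rep(1)[OF dc, of z] pc that unfolding f_def by auto
  have D: "(\<Sum>i<n. of_nat i * f i * a^i) = 0"
    using sum_rep(2)[OF dc, of a] pc unfolding f_def by simp
  obtain j where j: "j < n" "f j = 0" "f (Suc j mod n) = 0"
  proof -
    have "?P \<noteq> {..<n}"
    proof
      assume "?P = {..<n}"
      then have "card ?P = n" by simp
      then show False using c5 n9 by simp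
    qed
    then obtain j where "j < n" "j \<notin> ?P" by auto
    then show ?thesis using that by auto
  qed
  define r where "r i = (i + Suc j) mod n" for i
  define h where "h i = (if i < n then f (r i) else 0)" for i
  have npos: "n > 0" using n9 by simp
  have rlt: "r i < n" for i using npos by (simp add: r_def)
  have inj: "inj_on r {..<n}"
  proof (rule inj_onI)
    fix x y assume xy: "x \<in> {..<n}" "y \<in> {..<n}" "r x = r y"
    then obtain q1 q2 where "x + Suc j + n * q1 = y + Suc j + n * q2"
      unfolding r_def nat_mod_eq_iff by blast
    then have "x + n * q1 = y + n * q2" by simp
    then have "x mod n = y mod n" unfolding nat_mod_eq_iff by blast
    then show "x = y" using xy by simp
  qed
  have surj: "r ` {..<n} = {..<n}"
    by (rule endo_inj_surj) (use inj rlt in auto)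
  have hr: "i < n \<Longrightarrow> h i = f (r i)" for i by (simp add: h_def)
  have Eh: "(\<Sum>i<n. h i * z^i) = 0" if z: "z \<in> {1,-1,w}" for z
  proof -
    have "0 = (\<Sum>k<n. f k * z^k)" using E[OF z] by simp
    also have "\<dots> = (\<Sum>i<n. f (r i) * z^(r i))"
      using sum.reindex[OF inj, of "\<lambda>k. f k * z^k"] surj by simp
    also have "\<dots> = (\<Sum>i<n. h i * z^(i + Suc j))"
      by (rule sum.cong) (auto simp: hr r_def pow_mod[OF z])
    also have "\<dots> = z^(Suc j) * (\<Sum>i<n. h i * z^i)"
      by (simp add: sum_distrib_left power_add algebra_simps)
    finally show ?thesis using roots(2)[OF z] by simp
  qed
  have Dh: "(\<Sum>i<n. of_nat i * h i * a^i) = 0"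
  proof -
    have "0 = (\<Sum>k<n. of_nat k * f k * a^k)" using D by simp
    also have "\<dots> = (\<Sum>i<n. of_nat (r i) * f (r i) * a^(r i))"
      using sum.reindex[OF inj, of "\<lambda>k. of_nat k * f k * a^k"] surj by simp
    also have "\<dots> = (\<Sum>i<n. (of_nat i + of_nat (Suc j)) * h i * a^(i + Suc j))"
      by (rule sum.cong) (auto simp: hr r_def pow_mod[OF a_in] ofnat_mod[of "_ + Suc j", simplified])
    also have "\<dots> = a^(Suc j) * ((\<Sum>i<n. of_nat i * h i * a^i) + of_nat (Suc j) * (\<Sum>i<n. h i * a^i))"
      by (simp add: sum_distrib_left sum.distrib power_add algebra_simps)
    finally show ?thesis using roots(2)[OF a_in] Eh[OF a_in] by simp
  qed
  define T where "T = {i. h i \<noteq> 0}"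
  have Tsub: "T \<subseteq> {..<n}" by (auto simp: T_def h_def split: if_splits)
  have finT: "finite T" using Tsub finite_subset by blast
  have T0: "0 \<notin> T" using j npos by (simp add: T_def h_def r_def)
  have Tn1: "n - 1 \<notin> T"
  proof -
    have "n - 1 + Suc j = j + n" using npos by simp
    then have "r (n - 1) = j" using j by (simp add: r_def)
    then show ?thesis using j npos by (simp add: T_def h_def)
  qed
  have Tne: "T \<noteq> {}"
  proof -
    define k where "k = degree c"
    have "f k \<noteq> 0" using c0 unfolding f_def k_def by simp
    have "k < n" using dc unfolding k_def by simp
    then obtain i where "i < n" "r i = k" using surj by (metis imageE lessThan_iff)
    then have "i \<in> T" using \<open>f k \<noteq> 0\<close> by (simp add: T_def hr)
    then show ?thesis by auto
  qed
  have key: "f (Suc (r i) mod n) = h (Suc i)" if "i < n" for i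
  proof (cases "Suc i < n")
    case True
    then show ?thesis by (simp add: h_def r_def mod_Suc_eq)
  next
    case False
    then have "Suc i = n" using that by simp
    then have "Suc (r i) mod n = Suc j mod n" unfolding r_def
      by (metis add_Suc mod_Suc_eq mod_add_self1)
    then show ?thesis using j \<open>Suc i = n\<close> by (simp add: h_def)
  qed
  define Ph where "Ph = {i. i \<in> T \<or> Suc i \<in> T}"
  have Phsub: "Ph \<subseteq> {..<n}" using Tsub by (auto simp: Ph_def)
  have PPh: "?P = r ` Ph"
  proof
    show "?P \<subseteq> r ` Ph"
    proof
      fix k assume "k \<in> ?P"
      then have k: "k < n" "(f k, f (Suc k mod n)) \<noteq> (0,0)" by auto
      then obtain i where i: "i < n" "k = r i" using surj by (metis imageE lessThan_iff)
      then have "h i \<noteq> 0 \<or> h (Suc i) \<noteq> 0" using k key[OF i(1)] hr[OF i(1)] by auto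
      then have "i \<in> Ph" by (auto simp: Ph_def T_def)
      then show "k \<in> r ` Ph" using i by auto
    qed
    show "r ` Ph \<subseteq> ?P"
    proof
      fix k assume "k \<in> r ` Ph"
      then obtain i where i: "i \<in> Ph" "k = r i" by auto
      then have il: "i < n" using Phsub by auto
      have "h i \<noteq> 0 \<or> h (Suc i) \<noteq> 0" using i(1) by (auto simp: Ph_def T_def)
      then show "k \<in> ?P" using key[OF il] hr[OF il] i(2) rlt by auto
    qed
  qed
  have "card ?P = card Ph" unfolding PPh
    by (rule card_image) (rule inj_on_subset[OF inj Phsub])
  then have cPh: "card {i. i \<in> T \<or> Suc i \<in> T} \<le> 5" using c5 by (simp add: Ph_def)
  have ST: "(\<Sum>i<n. F i) = sum F T" if "\<And>i. h i = 0 \<Longrightarrow> F i = 0" for F :: "nat \<Rightarrow> 'a"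
    by (rule sum.mono_neutral_right) (use Tsub that in \<open>auto simp: T_def\<close>)
  have hT: "i \<in> T \<Longrightarrow> h i \<noteq> 0" for i by (simp add: T_def)
  from comb[OF finT Tne T0 cPh] show False
  proof (elim disjE exE conjE)
    fix b assume Tb: "T \<subseteq> {b..b+3}"
    define q where "q = Poly (map (\<lambda>k. h (b + k)) [0..<4])"
    have cq: "coeff q k = (if k < 4 then h (b + k) else 0)" for k
      by (simp add: q_def nth_default_def)
    have dq: "degree q < 4"
    proof -
      have "degree q \<le> 3" by (rule degree_le) (simp add: cq)
      then show ?thesis by simp
    qed
    have win: "{b..b+3} = (\<lambda>k. b + k) ` {..<4}"
    proof safe
      fix i assume "i \<in> {b..b+3}"
      then show "i \<in> (\<lambda>k. b + k) ` {..<4}" by (intro image_eqI[of _ _ "i - b"]) auto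
    qed auto
    have SW: "(\<Sum>i<n. F i) = (\<Sum>k<4. F (b + k))" if "\<And>i. h i = 0 \<Longrightarrow> F i = 0" for F :: "nat \<Rightarrow> 'a"
    proof -
      have "(\<Sum>i<n. F i) = sum F T" using ST that by blast
      also have "\<dots> = sum F {b..b+3}"
        by (rule sum.mono_neutral_left) (use Tb that in \<open>auto simp: T_def\<close>)
      also have "\<dots> = (\<Sum>k<4. F (b + k))" unfolding win by (subst sum.reindex) (auto simp: inj_on_def)
      finally show ?thesis .
    qed
    have pq: "poly q z = 0" if z: "z \<in> {1,-1,w}" for z
    proof -
      have "0 = (\<Sum>k<4. h (b + k) * z^(b + k))" using Eh[OF z] SW[of "\<lambda>i. h i * z^i"] by simp
      also have "\<dots> = z^b * (\<Sum>k<4. coeff q k * z^k)"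
        by (simp add: sum_distrib_left cq power_add algebra_simps)
      also have "\<dots> = z^b * poly q z" using sum_rep(1)[OF dq, of z] by simp
      finally show ?thesis using roots(2)[OF z] by simp
    qed
    have "0 = (\<Sum>k<4. of_nat (b + k) * h (b + k) * a^(b + k))" using Dh SW[of "\<lambda>i. of_nat i * h i * a^i"] by simp
    also have "\<dots> = a^b * (of_nat b * (\<Sum>k<4. coeff q k * a^k) + (\<Sum>k<4. of_nat k * coeff q k * a^k))"
      by (simp add: sum_distrib_left sum.distrib cq power_add algebra_simps)
    also have "\<dots> = a^b * (of_nat b * poly q a + a * poly (pderiv q) a)"
      using sum_rep[OF dq, of a] by simp
    finally have "a * poly (pderiv q) a = 0" using pq[OF a_in] roots(2)[OF a_in] by simp
    then have "poly (pderiv q) a = 0" using roots(2)[OF a_in] by simp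
    then have "G dvd q" unfolding G_dvd_iff using pq by auto
    have "q = 0"
    proof (rule ccontr)
      assume "q \<noteq> 0"
      then have "degree G \<le> degree q" using dvd_imp_degree_le[OF \<open>G dvd q\<close>] by simp
      then show False using degG dq by simp
    qed
    obtain i where "i \<in> T" using Tne by auto
    then have "i \<in> {b..b+3}" using Tb by blast
    then have "i - b < 4" "b + (i - b) = i" by auto
    then have "h i = coeff q (i - b)" using cq by simp
    then show False using \<open>q = 0\<close> hT[OF \<open>i \<in> T\<close>] by simp
  next
    fix u v assume uv: "u < v" and Tuv: "T = {u, v}"
    have hu: "h u \<noteq> 0" and hv: "h v \<noteq> 0" using hT Tuv by auto
    have vn: "v < n" using Tsub Tuv by auto
    have S2: "(\<Sum>i<n. F i) = F u + F v" if "\<And>i. h i = 0 \<Longrightarrow> F i = 0" for F :: "nat \<Rightarrow> 'a"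
      using ST[OF that] Tuv uv by simp
    have e: "h u * z^u + h v * z^v = 0" if z: "z \<in> {1,-1,w}" for z
      using Eh[OF z] S2[of "\<lambda>i. h i * z^i"] by simp
    have huv: "h u = - h v" using e[of 1] by (simp add: eq_neg_iff_add_eq_0)
    have zd: "z^(v - u) = 1" if z: "z \<in> {1,-1,w}" for z
    proof -
      have zv: "z^v = z^u * z^(v-u)" using uv by (simp add: power_add[symmetric])
      have "h v * z^u * (z^(v-u) - 1) = 0" using e[OF z] unfolding zv huv by (simp add: algebra_simps)
      then show ?thesis using hv roots(2)[OF z] by simp
    qed
    have av: "a^v = a^u" using zd[OF a_in] uv by (metis le_add_diff_inverse less_imp_le power_add mult_1_right)
    have "of_nat u * h u * a^u + of_nat v * h v * a^v = 0"
      using Dh S2[of "\<lambda>i. of_nat i * h i * a^i"] by simp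
    then have "h v * a^u * (of_nat v - of_nat u) = 0" unfolding av huv by (simp add: algebra_simps)
    then have "(of_nat v :: 'a) = of_nat u" using hv roots(2)[OF a_in] by simp
    then have "(of_nat (v - u) :: 'a) = 0" using uv by (simp add: of_nat_diff)
    then have pd: "p dvd (v - u)" using ofnat0 by simp
    have ed: "even (v - u)"
    proof (rule ccontr)
      assume "odd (v - u)"
      then have "(-1::'a)^(v-u) = -1" by simp
      then have "(-1::'a) = 1" using zd[of "-1"] by simp
      then show False using two by (metis one_add_one add_eq_0_iff2)
    qed
    have "l dvd (v - u)" using zd[of w] w_pow by simp
    then have "n dvd (v - u)" using ndvd pd ed by simp
    then have "n \<le> v - u" using uv by (simp add: dvd_imp_le)
    then show False using vn by simp
  next
    fix s t assume st: "s \<noteq> t" "s \<noteq> Suc t" and Tst: "T = {s, t, Suc t}"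
    have hs: "h s \<noteq> 0" and ht: "h t \<noteq> 0" and hSt: "h (Suc t) \<noteq> 0" using hT Tst by auto
    have S3: "(\<Sum>i<n. F i) = F s + F t + F (Suc t)" if "\<And>i. h i = 0 \<Longrightarrow> F i = 0" for F :: "nat \<Rightarrow> 'a"
      using ST[OF that] Tst st by (simp add: add.assoc)
    have e1: "h s + h t + h (Suc t) = 0" using Eh[of 1] S3[of "\<lambda>i. h i * 1^i"] by simp
    have e2: "h s * (-1)^s + h t * (-1)^t - h (Suc t) * (-1)^t = 0"
      using Eh[of "-1"] S3[of "\<lambda>i. h i * (-1)^i"] by simp
    have "2 * h t = 0 \<or> 2 * h (Suc t) = 0"
    proof (cases "even s"; cases "even t")
      assume "even s" "even t"
      then have "h s + h t - h (Suc t) = 0" using e2 by simp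
      then have "2 * h (Suc t) = 0" using e1 by algebra
      then show ?thesis by simp
    next
      assume "even s" "odd t"
      then have "h s - h t + h (Suc t) = 0" using e2 by simp
      then have "2 * h t = 0" using e1 by algebra
      then show ?thesis by simp
    next
      assume "odd s" "even t"
      then have "- h s + h t - h (Suc t) = 0" using e2 by simp
      then have "2 * h t = 0" using e1 by algebra
      then show ?thesis by simp
    next
      assume "odd s" "odd t"
      then have "- h s - h t + h (Suc t) = 0" using e2 by simp
      then have "2 * h (Suc t) = 0" using e1 by algebra
      then show ?thesis by simp
    qed
    then show False using two ht hSt by simp
  qed
qed

end

context pset begin

lemma Gcoeffs: "G = [:-(a*w), w + a, a*w - 1, -w - a, 1:]"
  unfolding G_def by (simp add: algebra_simps)

lemma a0: "a \<noteq> 0" using roots(2)[OF a_in] .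

lemma nz: "w + a \<noteq> 0" "a * w - 1 \<noteq> 0"
proof -
  have h2: "1 + w \<noteq> 0" using wm1 by (metis add.commute add_eq_0_iff2)
  have "a = 1 \<or> a = -1 \<or> a = w" using a_in by auto
  then have "w + a \<noteq> 0 \<and> a * w - 1 \<noteq> 0"
  proof (elim disjE)
    assume a1: "a = 1"
    have h2': "w + 1 \<noteq> 0" using wm1 add_eq_0_iff2 by metis
    have "w + a = w + 1" "a * w - 1 = w - 1" using a1 by simp_all
    then show ?thesis using h2' w1 by simp
  next
    assume a1: "a = -1"
    have e: "w + a = w - 1" "a * w - 1 = - (1 + w)" using a1 by simp_all
    have "w - 1 \<noteq> 0" using w1 by simp
    moreover have "- (1 + w) \<noteq> 0" using h2 by (simp only: neg_equal_0_iff_equal not_False_eq_True)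
    ultimately show ?thesis unfolding e by blast
  next
    assume aw: "a = w"
    have "w + w = 2 * w" by simp
    then have "w + a \<noteq> 0" using two w0 aw by simp
    moreover have "a * w - 1 \<noteq> 0" using w2 aw by (simp add: power2_eq_square)
    ultimately show ?thesis by simp
  qed
  then show "w + a \<noteq> 0" "a * w - 1 \<noteq> 0" by auto
qed

lemma cG_nz: "i \<le> 4 \<Longrightarrow> coeff G i \<noteq> 0"
proof -
  assume "i \<le> 4"
  then have "i = 0 \<or> i = 1 \<or> i = 2 \<or> i = 3 \<or> i = 4" by auto
  moreover have "- w - a = - (w + a)" by simp
  ultimately show ?thesis using nz a0 w0 unfolding Gcoeffs
    by (auto simp: numeral_eq_Suc)
qed

lemma cG_z: "i > 4 \<Longrightarrow> coeff G i = 0" using degG by (simp add: coeff_eq_0)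

lemma pairsG: "card {i. i < n \<and> (coeff G i, coeff G (Suc i mod n)) \<noteq> (0,0)} = 6"
proof -
  have "{i. i < n \<and> (coeff G i, coeff G (Suc i mod n)) \<noteq> (0,0)} = {0,1,2,3,4,n-1}"
  proof (rule set_eqI)
    fix i
    show "i \<in> {i. i < n \<and> (coeff G i, coeff G (Suc i mod n)) \<noteq> (0,0)} \<longleftrightarrow> i \<in> {0,1,2,3,4,n-1}"
    proof (cases "i \<le> 4")
      case True then show ?thesis using cG_nz n9 by auto
    next
      case False
      show ?thesis
      proof (cases "i = n - 1")
        case True
        then have "Suc i mod n = 0" using n9 by simp
        then show ?thesis using True cG_nz[of 0] n9 by auto
      next
        case ni: False
        show ?thesis
        proof (cases "i < n")
          case True
          then have "Suc i mod n = Suc i" using ni by simp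
          then show ?thesis using False ni cG_z[of i] cG_z[of "Suc i"] by auto
        next
          case False then show ?thesis using n9 by auto
        qed
      qed
    qed
  qed
  also have "card {0,1,2,3,4,n-1} = 6" using n9 by (intro card6) auto
  finally show ?thesis .
qed

lemma pair_ne: "((u1::'a), (u2::'a)) \<noteq> (v1, v2) \<longleftrightarrow> (u1 - v1, u2 - v2) \<noteq> (0, 0)"
  by (simp only: prod.inject right_minus_eq)

lemma pd_eq: "pair_dist n (x::'a poly) y = card {i. i < n \<and> (coeff (x - y) i, coeff (x - y) (Suc i mod n)) \<noteq> (0,0)}"
  unfolding pair_dist_def coeff_diff
proof (rule arg_cong[where f=card], rule Collect_cong)
  fix i
  show "(i < n \<and> (coeff x i, coeff x (Suc i mod n)) \<noteq> (coeff y i, coeff y (Suc i mod n))) =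
    (i < n \<and> (coeff x i - coeff y i, coeff x (Suc i mod n) - coeff y (Suc i mod n)) \<noteq> (0, 0))"
    using pair_ne[of "coeff x i" "coeff x (Suc i mod n)" "coeff y i" "coeff y (Suc i mod n)"] by blast
qed

theorem main: "mds_pair_code n (cyclic_code n G) \<and> min_pair_dist n (cyclic_code n G) = 6"
proof -
  let ?C = "cyclic_code n G"
  let ?D = "{pair_dist n x y | x y. x \<in> ?C \<and> y \<in> ?C \<and> x \<noteq> y}"
  have ge: "6 \<le> d" if "d \<in> ?D" for d
  proof -
    obtain x y where xy: "x \<in> ?C" "y \<in> ?C" "x \<noteq> y" "d = pair_dist n x y" using \<open>d \<in> ?D\<close> by auto
    have "degree (x - y) < n" using code_mem(1)[OF xy(1)] code_mem(1)[OF xy(2)] by (rule degree_diff_less)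
    moreover have "G dvd (x - y)" using code_mem(2)[OF xy(1)] code_mem(2)[OF xy(2)] by (rule dvd_diff)
    moreover have "x - y \<noteq> 0" using xy(3) by simp
    ultimately have "6 \<le> card {i. i < n \<and> (coeff (x - y) i, coeff (x - y) (Suc i mod n)) \<noteq> (0,0)}"
      by (rule lower)
    then show ?thesis unfolding xy(4) pd_eq .
  qed
  have six: "6 \<in> ?D"
  proof -
    have "pair_dist n G 0 = 6" using pd_eq[of G 0] pairsG by simp
    then show ?thesis using code_G code_0 G_ne by force
  qed
  have fin: "finite ?D"
  proof (rule finite_subset)
    show "?D \<subseteq> {..n}"
    proof
      fix d assume "d \<in> ?D"
      then obtain x y :: "'a poly" where "d = pair_dist n x y" by blast
      moreover have "pair_dist n x y \<le> card {..<n}" unfolding pair_dist_def by (rule card_mono) auto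
      ultimately show "d \<in> {..n}" by simp
    qed
  qed simp
  have "min_pair_dist n ?C = 6" unfolding min_pair_dist_def
    by (rule Min_eqI[OF fin]) (use ge six in auto)
  moreover have "mds_pair_code n ?C"
  proof -
    have "n - 6 + 2 = n - 4" using n9 by simp
    then show ?thesis unfolding mds_pair_code_def using calculation card_code card_a by simp
  qed
  ultimately show ?thesis by simp
qed

end

theorem proposition3p2:
  fixes p l n r1 r2 r3 :: nat and \<omega> :: "'a::{field,finite}"
  assumes "prime p" and "odd p" and "CARD('a) = p"
    and "l > 2" and "l dvd p - 1"
    and "primitive_root_of_unity l \<omega>"
    and "n = (if even l then l * p else 2 * l * p)"
    and "(r1, r2, r3) \<in> {(2,1,1), (1,2,1), (1,1,2)}"
  shows "mds_pair_code n (cyclic_code n ([:-1, 1:] ^ r1 * [:1, 1:] ^ r2 * [:-\<omega>, 1:] ^ r3))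
       \<and> min_pair_dist n (cyclic_code n ([:-1, 1:] ^ r1 * [:1, 1:] ^ r2 * [:-\<omega>, 1:] ^ r3)) = 6"
proof -
  have "\<exists>a. a \<in> {1,-1,\<omega>} \<and> [:-1, 1:] ^ r1 * [:1, 1:] ^ r2 * [:-\<omega>, 1:] ^ r3
          = [:-a,1:] * ([:-1,1:]*[:1,1:]*[:-\<omega>,1:])"
  proof -
    consider "r1 = 2 \<and> r2 = 1 \<and> r3 = 1" | "r1 = 1 \<and> r2 = 2 \<and> r3 = 1" | "r1 = 1 \<and> r2 = 1 \<and> r3 = 2"
      using assms(8) by auto
    then show ?thesis
    proof cases
      case 1
      then have "[:-1, 1:] ^ r1 * [:1, 1:] ^ r2 * [:-\<omega>, 1:] ^ r3
          = [:-1,1:] * ([:-1,1:]*[:1,1:]*[:-\<omega>,1:])" by (simp add: power2_eq_square mult_ac)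
      then show ?thesis by blast
    next
      case 2
      then have "[:-1, 1:] ^ r1 * [:1, 1:] ^ r2 * [:-\<omega>, 1:] ^ r3
          = [:-(-1),1:] * ([:-1,1:]*[:1,1:]*[:-\<omega>,1:])" by (simp add: power2_eq_square mult_ac)
      then show ?thesis by blast
    next
      case 3
      then have "[:-1, 1:] ^ r1 * [:1, 1:] ^ r2 * [:-\<omega>, 1:] ^ r3
          = [:-\<omega>,1:] * ([:-1,1:]*[:1,1:]*[:-\<omega>,1:])" by (simp add: power2_eq_square mult_ac)
      then show ?thesis by blast
    qed
  qed
  then obtain a where a: "a \<in> {1,-1,\<omega>}" and g: "[:-1, 1:] ^ r1 * [:1, 1:] ^ r2 * [:-\<omega>, 1:] ^ r3
          = [:-a,1:] * ([:-1,1:]*[:1,1:]*[:-\<omega>,1:])" by blast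
  interpret pset p l n \<omega> a
    using assms(1-7) a by unfold_locales auto
  show ?thesis using main unfolding G_def g .
qed

end
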